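(* For all constants $c_1,c_2>0$ and every constant $\epsilon>0$ there is a constant $K$ such that the following holds for all $n\ge 3$: every $B_2$-circuit with $n$ inputs, size at most $c_1 n$ and depth at most $c_2\log n$ computing a function $f:\{0,1\}^n\to\{0,1\}$ can be converted into a nondeterministic formula computing $f$ with $n$ actual inputs, at most $K n/\log\log n$ guess inputs, and size at most $K n^{1+\epsilon}$.
   Context: A circuit is a directed acyclic graph whose in-degree-0 nodes (inputs) are each labeled by a variable or a constant $0$ or $1$, whose other nodes (gates) are each labeled by a Boolean function, with one designated output node. $B_2$ is the set of all Boolean functions $\{0,1\}^2\to\{0,1\}$; a $B_2$-circuit is a circuit whose gates have fan-in $2$ and are labeled by functions in $B_2$. A formula is a circuit in which every node has fan-out at most $1$ (here with fan-in-$2$ gates labeled by functions in $B_2$). A nondeterministic circuit (resp. formula) has actual inputs $x\in\{0,1\}^n$ and guess inputs $y\in\{0,1\}^m$ and computes $f$ where $f(x)=1$ iff there exists $y$ making the output $1$. Size is the number of gates; depth is the length of the longest path from an input to the output. *)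

theory Defs
  imports Complex_Main
begin

text \<open>A circuit is a list of nodes in topological order.\<close>

datatype node = CVar nat | CConst bool | CGate "bool \<Rightarrow> bool \<Rightarrow> bool" nat nat

record circuit =
  nodes :: "node list"
  out_node :: nat

definition node_ok :: "nat \<Rightarrow> node list \<Rightarrow> nat \<Rightarrow> bool" where
  "node_ok n cs k = (case cs ! k of
      CVar i \<Rightarrow> i < n
    | CConst b \<Rightarrow> True
    | CGate g i j \<Rightarrow> i < k \<and> j < k)"

definition wf_circuit :: "nat \<Rightarrow> circuit \<Rightarrow> bool" where
  "wf_circuit n C = (out_node C < length (nodes C) \<and>
      (\<forall>k < length (nodes C). node_ok n (nodes C) k))"

function node_val :: "node list \<Rightarrow> (nat \<Rightarrow> bool) \<Rightarrow> nat \<Rightarrow> bool" where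
  "node_val cs x k = (if k < length cs then
      (case cs ! k of
         CVar i \<Rightarrow> x i
       | CConst b \<Rightarrow> b
       | CGate g i j \<Rightarrow> (if i < k \<and> j < k then g (node_val cs x i) (node_val cs x j) else False))
    else False)"
  by auto
termination by (relation "measure (\<lambda>(cs, x, k). k)") auto

function node_depth :: "node list \<Rightarrow> nat \<Rightarrow> nat" where
  "node_depth cs k = (if k < length cs then
      (case cs ! k of
         CGate g i j \<Rightarrow> (if i < k \<and> j < k then Suc (max (node_depth cs i) (node_depth cs j)) else 0)
       | _ \<Rightarrow> 0)
    else 0)"
  by auto
termination by (relation "measure (\<lambda>(cs, k). k)") auto

definition circuit_eval :: "circuit \<Rightarrow> (nat \<Rightarrow> bool) \<Rightarrow> bool" where
  "circuit_eval C x = node_val (nodes C) x (out_node C)"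

definition circuit_depth :: "circuit \<Rightarrow> nat" where
  "circuit_depth C = node_depth (nodes C) (out_node C)"

definition circuit_size :: "circuit \<Rightarrow> nat" where
  "circuit_size C = length (filter (\<lambda>v. case v of CGate _ _ _ \<Rightarrow> True | _ \<Rightarrow> False) (nodes C))"

text \<open>A formula (fan-out at most 1, fan-in-2 B2 gates) is a tree. Leaves are labelled
by an actual input x_i (Inl i), a guess input y_j (Inr j), or a constant.\<close>

datatype formula = FVar "nat + nat" | FConst bool | FGate "bool \<Rightarrow> bool \<Rightarrow> bool" formula formula

fun feval :: "formula \<Rightarrow> (nat \<Rightarrow> bool) \<Rightarrow> (nat \<Rightarrow> bool) \<Rightarrow> bool" where
  "feval (FVar (Inl i)) x y = x i"
| "feval (FVar (Inr j)) x y = y j"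
| "feval (FConst b) x y = b"
| "feval (FGate g a b) x y = g (feval a x y) (feval b x y)"

fun fsize :: "formula \<Rightarrow> nat" where
  "fsize (FVar _) = 0"
| "fsize (FConst _) = 0"
| "fsize (FGate g a b) = Suc (fsize a + fsize b)"

fun fvars :: "formula \<Rightarrow> (nat + nat) set" where
  "fvars (FVar v) = {v}"
| "fvars (FConst _) = {}"
| "fvars (FGate g a b) = fvars a \<union> fvars b"

definition nd_formula :: "nat \<Rightarrow> nat \<Rightarrow> formula \<Rightarrow> bool" where
  "nd_formula n m F = (\<forall>v \<in> fvars F. case v of Inl i \<Rightarrow> i < n | Inr j \<Rightarrow> j < m)"

definition nd_computes :: "formula \<Rightarrow> ((nat \<Rightarrow> bool) \<Rightarrow> bool) \<Rightarrow> bool" where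
  "nd_computes F f = (\<forall>x. f x = (\<exists>y. feval F x y))"

end

theory Submission
  imports Defs
begin


function phi :: "node list \<Rightarrow> nat set \<Rightarrow> (nat \<Rightarrow> nat) \<Rightarrow> nat \<Rightarrow> formula" where
  "phi cs R idx k = (if k < length cs then
      (case cs ! k of
         CVar i \<Rightarrow> FVar (Inl i)
       | CConst b \<Rightarrow> FConst b
       | CGate g i j \<Rightarrow> (if i < k \<and> j < k then
            FGate g (if i \<in> R then FVar (Inr (idx i)) else phi cs R idx i)
                    (if j \<in> R then FVar (Inr (idx j)) else phi cs R idx j)
          else FConst False))
    else FConst False)"
  by auto
termination by (relation "measure (\<lambda>(cs, R, idx, k). k)") auto

declare phi.simps[simp del] node_val.simps[simp del] node_depth.simps[simp del]

lemma phi_val: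
  assumes "\<forall>r\<in>R. y (idx r) = node_val cs x r"
  shows "feval (phi cs R idx k) x y = node_val cs x k"
proof (induction k rule: less_induct)
  case (less k)
  show ?case
  proof (cases "k < length cs")
    case True
    then show ?thesis
      apply (subst phi.simps, subst node_val.simps)
      apply (cases "cs ! k")
      using less assms by auto
  next
    case False
    then show ?thesis by (subst phi.simps, subst node_val.simps) simp
  qed
qed

lemma phi_val2:
  assumes "\<forall>r\<in>R. y (idx r) = feval (phi cs R idx r) x y"
  shows "feval (phi cs R idx k) x y = node_val cs x k"
proof (induction k rule: less_induct)
  case (less k)
  show ?case
  proof (cases "k < length cs")
    case True
    then show ?thesis
      apply (subst phi.simps, subst node_val.simps)
      apply (cases "cs ! k")
      using less assms by auto
  next
    case False
    then show ?thesis by (subst phi.simps, subst node_val.simps) simp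
  qed
qed

lemma phi_vars:
  assumes "\<forall>k<length cs. node_ok n cs k"
  shows "fvars (phi cs R idx k) \<subseteq> {Inl i|i. i<n} \<union> {Inr (idx c)|c. c\<in>R}"
proof (induction k rule: less_induct)
  case (less k)
  show ?case
  proof (cases "k < length cs")
    case True
    then show ?thesis
      apply (subst phi.simps)
      apply (cases "cs ! k")
      using less assms[rule_format, of k] by (auto simp: node_ok_def)
  next
    case False
    then show ?thesis by (subst phi.simps) simp
  qed
qed

lemma phi_size:
  assumes cl: "\<And>v g i j. v \<in> S \<Longrightarrow> v < length cs \<Longrightarrow> cs ! v = CGate g i j \<Longrightarrow> i < v \<Longrightarrow> j < v \<Longrightarrow>
      (i \<notin> R \<longrightarrow> i \<in> S \<and> P i < P v) \<and> (j \<notin> R \<longrightarrow> j \<in> S \<and> P j < P v)"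
  shows "v \<in> S \<Longrightarrow> fsize (phi cs R idx v) < 2 ^ (P v + 1)"
proof (induction v rule: less_induct)
  case (less v)
  show ?case
  proof (cases "v < length cs")
    case True
    show ?thesis
    proof (cases "cs ! v")
      case (CGate g i j)
      show ?thesis
      proof (cases "i < v \<and> j < v")
        case ij: True
        have c: "(i \<notin> R \<longrightarrow> i \<in> S \<and> P i < P v) \<and> (j \<notin> R \<longrightarrow> j \<in> S \<and> P j < P v)"
          using cl[OF less.prems True CGate] ij by auto
        have pw: "(2::nat) ^ (P c + 1) \<le> 2 ^ P v" if "P c < P v" for c
          using that by (intro power_increasing) auto
        have a: "fsize (if i \<in> R then FVar (Inr (idx i)) else phi cs R idx i) < 2 ^ P v"
          using c less.IH[of i] ij pw[of i] by (cases "i \<in> R") auto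
        have b: "fsize (if j \<in> R then FVar (Inr (idx j)) else phi cs R idx j) < 2 ^ P v"
          using c less.IH[of j] ij pw[of j] by (cases "j \<in> R") auto
        have "fsize (phi cs R idx v) = Suc (fsize (if i \<in> R then FVar (Inr (idx i)) else phi cs R idx i)
            + fsize (if j \<in> R then FVar (Inr (idx j)) else phi cs R idx j))"
          using True CGate ij by (subst phi.simps) simp
        then show ?thesis using a b by simp
      next
        case False
        then show ?thesis using True CGate by (subst phi.simps) auto
      qed
    qed (use True in \<open>subst phi.simps; simp\<close>)+
  next
    case False
    then show ?thesis by (subst phi.simps) simp
  qed
qed

fun bigand :: "formula list \<Rightarrow> formula \<Rightarrow> formula" where
  "bigand [] G = G"
| "bigand (A # As) G = FGate (\<and>) A (bigand As G)"

lemma bigand_eval: "feval (bigand As G) x y = ((\<forall>A\<in>set As. feval A x y) \<and> feval G x y)"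
  by (induction As) auto

lemma bigand_size: "fsize (bigand As G) = sum_list (map fsize As) + length As + fsize G"
  by (induction As) auto

lemma bigand_vars: "fvars (bigand As G) = \<Union>(fvars ` set As) \<union> fvars G"
  by (induction As) auto

lemma sum_list_le: "(\<forall>a\<in>set xs. f a \<le> M) \<Longrightarrow> sum_list (map f xs) \<le> length xs * (M::nat)"
  by (induction xs) auto

lemma construct:
  assumes wf: "wf_circuit n C" and fin: "finite R"
    and sz: "\<And>idx v. v \<in> insert (out_node C) R \<Longrightarrow> fsize (phi (nodes C) R idx v) \<le> M"
  shows "\<exists>F. nd_formula n (card R) F \<and> nd_computes F (circuit_eval C)
            \<and> fsize F \<le> (card R + 1) * (M + 2)"
proof -
  obtain idx where bij: "bij_betw idx R {0..<card R}" using ex_bij_betw_finite_nat[OF fin] by blast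
  define cs where "cs = nodes C"
  define rl where "rl = sorted_list_of_set R"
  have setrl: "set rl = R" and lrl: "length rl = card R" using fin by (auto simp: rl_def)
  define As where "As = map (\<lambda>r. FGate (=) (FVar (Inr (idx r))) (phi cs R idx r)) rl"
  define F where "F = bigand As (phi cs R idx (out_node C))"
  have wfk: "\<forall>k<length cs. node_ok n cs k" using wf by (simp add: wf_circuit_def cs_def)
  have "nd_formula n (card R) F"
    unfolding nd_formula_def
  proof
    fix v assume "v \<in> fvars F"
    then have "v \<in> {Inl i|i. i<n} \<union> {Inr (idx c)|c. c\<in>R}"
    proof -
      have pv: "\<And>k. fvars (phi cs R idx k) \<subseteq> {Inl i|i. i<n} \<union> {Inr (idx c)|c. c\<in>R}"
        using phi_vars[OF wfk] by blast
      from \<open>v \<in> fvars F\<close> have "v \<in> fvars (phi cs R idx (out_node C)) \<or> (\<exists>r\<in>R. v = Inr (idx r) \<or> v \<in> fvars (phi cs R idx r))"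
        unfolding F_def As_def bigand_vars by (auto simp: setrl)
      then show ?thesis using pv by blast
    qed
    then show "case v of Inl i \<Rightarrow> i < n | Inr j \<Rightarrow> j < card R"
      using bij by (auto simp: bij_betw_def)
  qed
  moreover have "nd_computes F (circuit_eval C)"
    unfolding nd_computes_def
  proof
    fix x
    show "circuit_eval C x = (\<exists>y. feval F x y)"
    proof
      assume h: "circuit_eval C x"
      define y where "y = (\<lambda>j. node_val cs x (the_inv_into R idx j))"
      have yr: "\<forall>r\<in>R. y (idx r) = node_val cs x r"
        using bij by (auto simp: y_def bij_betw_def the_inv_into_f_f)
      have "feval F x y" unfolding F_def bigand_eval As_def
        using phi_val[where R=R and y=y and idx=idx and cs=cs and x=x, OF yr] h yr by (auto simp: circuit_eval_def cs_def setrl)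
      then show "\<exists>y. feval F x y" by blast
    next
      assume "\<exists>y. feval F x y"
      then obtain y where h: "feval F x y" by blast
      have yr: "\<forall>r\<in>R. y (idx r) = feval (phi cs R idx r) x y"
        using h unfolding F_def bigand_eval As_def by (auto simp: setrl)
      show "circuit_eval C x"
        using h phi_val2[where R=R and y=y and idx=idx and cs=cs and x=x, OF yr] unfolding F_def bigand_eval by (simp add: circuit_eval_def cs_def)
    qed
  qed
  moreover have "fsize F \<le> (card R + 1) * (M + 2)"
  proof -
    have "sum_list (map fsize As) \<le> length As * (M + 1)"
      by (rule sum_list_le) (auto simp: As_def setrl cs_def intro: sz)
    moreover have "fsize (phi cs R idx (out_node C)) \<le> M" using sz by (simp add: cs_def)
    ultimately show ?thesis unfolding F_def bigand_size by (simp add: As_def lrl algebra_simps)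
  qed
  ultimately show ?thesis by blast
qed




lemma depth_child:
  assumes "k < length cs" "cs ! k = CGate g i j" "i < k" "j < k"
  shows "node_depth cs i < node_depth cs k" "node_depth cs j < node_depth cs k"
  using assms by (subst (2) node_depth.simps; simp)+

definition pot :: "nat \<Rightarrow> nat \<Rightarrow> nat \<Rightarrow> nat" where
  "pot q B x = x div (q * B) * B + x mod B"

lemma pot_mono:
  assumes "B > 0" "q > 0" "x < y" "\<not> (x div (q*B) = y div (q*B) \<and> x div B \<noteq> y div B)"
  shows "pot q B x < pot q B y"
proof (cases "x div (q*B) = y div (q*B)")
  case True
  then have e: "x div B = y div B" using assms by blast
  have "x mod B < y mod B"
  proof -
    have "x = x div B * B + x mod B" "y = y div B * B + y mod B" by simp_all
    then show ?thesis using e assms(3) by (metis add_less_cancel_left)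
  qed
  then show ?thesis using True by (simp add: pot_def)
next
  case False
  have "x div (q*B) \<le> y div (q*B)" using assms(3) by (simp add: div_le_mono)
  then have lt: "x div (q*B) + 1 \<le> y div (q*B)" using False by linarith
  have "pot q B x < (x div (q*B) + 1) * B" using assms(1) by (simp add: pot_def)
  also have "\<dots> \<le> y div (q*B) * B" using lt by (intro mult_right_mono) auto
  also have "\<dots> \<le> pot q B y" by (simp add: pot_def)
  finally show ?thesis .
qed

lemma pot_bound:
  assumes "B > 0" "x \<le> D"
  shows "pot q B x + 1 \<le> (D div (q*B) + 1) * B"
proof -
  have "x div (q*B) \<le> D div (q*B)" using assms by (simp add: div_le_mono)
  then have "x div (q*B) * B \<le> D div (q*B) * B" by simp
  moreover have "x mod B < B" using assms by simp
  ultimately have "x div (q*B) * B + x mod B + 1 \<le> D div (q*B) * B + B" by linarith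
  then show ?thesis by (simp add: pot_def)
qed

definition cls :: "nat \<Rightarrow> nat \<Rightarrow> nat \<Rightarrow> nat \<Rightarrow> bool" where
  "cls q j x y = (x div q ^ Suc j = y div q ^ Suc j \<and> x div q ^ j \<noteq> y div q ^ j)"

lemma cls_disj:
  assumes "j < j'" "cls q j x y" "cls q j' x y"
  shows False
proof -
  obtain d where d: "j' = Suc j + d" using assms(1) less_iff_Suc_add by blast
  have "x div q ^ j' = x div q ^ Suc j div q ^ d" by (simp add: d power_add div_mult2_eq)
  moreover have "y div q ^ j' = y div q ^ Suc j div q ^ d" by (simp add: d power_add div_mult2_eq)
  ultimately show False using assms(2,3) by (simp add: cls_def)
qed

lemma averaging:
  fixes f :: "nat \<Rightarrow> nat"
  assumes "finite I" "I \<noteq> {}"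
  shows "\<exists>i\<in>I. f i * card I \<le> sum f I"
proof (rule ccontr)
  assume "\<not> ?thesis"
  then have h: "\<forall>i\<in>I. sum f I < f i * card I" by auto
  have "sum (\<lambda>_. sum f I) I < sum (\<lambda>i. f i * card I) I"
    using assms h by (intro sum_strict_mono) auto
  then show False by (simp add: sum_distrib_right[symmetric])
qed




definition isg :: "node \<Rightarrow> bool" where
  "isg v = (case v of CGate _ _ _ \<Rightarrow> True | _ \<Rightarrow> False)"

definition child :: "node list \<Rightarrow> nat \<times> bool \<Rightarrow> nat" where
  "child cs e = (case cs ! fst e of CGate g i j \<Rightarrow> if snd e then i else j | _ \<Rightarrow> 0)"

lemma size_card: "circuit_size C = card {v. v < length (nodes C) \<and> isg (nodes C ! v)}"
  unfolding circuit_size_def length_filter_conv_card isg_def by simp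

lemma small_case:
  assumes wf: "wf_circuit n C" and d: "node_depth (nodes C) (out_node C) \<le> D"
  shows "fsize (phi (nodes C) {} idx (out_node C)) < 2 ^ (D + 1)"
proof -
  define cs where "cs = nodes C"
  define S where "S = {v. v < length cs \<and> node_depth cs v \<le> D}"
  have "fsize (phi cs {} idx (out_node C)) < 2 ^ (node_depth cs (out_node C) + 1)"
  proof (rule phi_size[where S=S])
    fix v g i j assume "v \<in> S" "v < length cs" "cs ! v = CGate g i j" "i < v" "j < v"
    then show "(i \<notin> {} \<longrightarrow> i \<in> S \<and> node_depth cs i < node_depth cs v) \<and>
       (j \<notin> {} \<longrightarrow> j \<in> S \<and> node_depth cs j < node_depth cs v)"
      using depth_child[of v cs g i j] by (auto simp: S_def)
  next
    show "out_node C \<in> S" using wf d by (auto simp: S_def cs_def wf_circuit_def)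
  qed
  also have "\<dots> \<le> 2 ^ (D + 1)" using d by (intro power_increasing) (auto simp: cs_def)
  finally show ?thesis by (simp add: cs_def)
qed

lemma valiant:
  assumes wf: "wf_circuit n C" and d: "node_depth (nodes C) (out_node C) \<le> D"
    and q: "q \<ge> 2" and b: "b \<ge> 1" and bq: "\<And>j. j < b \<Longrightarrow> q ^ Suc j \<le> D"
  shows "\<exists>R T. finite R \<and> card R * b \<le> 2 * circuit_size C \<and> T * q \<le> 2 * D \<and>
     (\<forall>idx v. v \<in> insert (out_node C) R \<longrightarrow> fsize (phi (nodes C) R idx v) < 2 ^ T)"
proof -
  define cs where "cs = nodes C"
  define dep where "dep = node_depth cs"
  define S where "S = {v. v < length cs \<and> dep v \<le> D}"
  define G where "G = {v. v < length cs \<and> isg (cs ! v)}"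
  define E where "E = {e::nat\<times>bool. fst e \<in> S \<and> isg (cs ! fst e)}"
  define Ej where "Ej = (\<lambda>j. {e \<in> E. cls q j (dep (child cs e)) (dep (fst e))})"
  have wfk: "\<And>k. k < length cs \<Longrightarrow> node_ok n cs k" using wf by (simp add: wf_circuit_def cs_def)
  have cG: "card G = circuit_size C" by (simp add: size_card G_def cs_def)
  have finG: "finite G" by (simp add: G_def)
  have EG: "E \<subseteq> G \<times> UNIV"
  proof
    fix e assume "e \<in> E" then show "e \<in> G \<times> UNIV" by (cases e) (simp add: E_def G_def S_def)
  qed
  have finE: "finite E" by (rule finite_subset[OF EG]) (simp add: finG)
  have cE: "card E \<le> 2 * card G"
  proof -
    have "card E \<le> card (G \<times> (UNIV :: bool set))" using EG finG by (intro card_mono) auto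
    then show ?thesis by (simp add: card_cartesian_product)
  qed
  have "(\<Sum>j\<in>{..<b}. card (Ej j)) = card (\<Union>(Ej ` {..<b}))"
  proof (rule card_UN_disjoint[symmetric])
    show "\<forall>i\<in>{..<b}. finite (Ej i)" using finE by (auto simp: Ej_def)
    show "\<forall>i\<in>{..<b}. \<forall>j\<in>{..<b}. i \<noteq> j \<longrightarrow> Ej i \<inter> Ej j = {}"
    proof (intro ballI impI)
      fix a c assume "a \<in> {..<b}" "c \<in> {..<b}" "a \<noteq> c"
      then have "a < c \<or> c < a" by linarith
      then show "Ej a \<inter> Ej c = {}" unfolding Ej_def using cls_disj[of a c q] cls_disj[of c a q] by blast
    qed
  qed simp
  also have "\<dots> \<le> card E" using finE by (intro card_mono) (auto simp: Ej_def)
  finally have sumE: "(\<Sum>j\<in>{..<b}. card (Ej j)) \<le> 2 * circuit_size C" using cE cG by simp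
  obtain j where j: "j < b" and cj: "card (Ej j) * b \<le> (\<Sum>j\<in>{..<b}. card (Ej j))"
  proof -
    have "{..<b} \<noteq> {}" using b by (metis lessThan_iff less_le_trans zero_less_one empty_iff)
    then show ?thesis using averaging[of "{..<b}" "\<lambda>j. card (Ej j)"] that by auto
  qed
  define R where "R = child cs ` Ej j"
  have finR: "finite R" using finE by (simp add: R_def Ej_def)
  have cR: "card R \<le> card (Ej j)" unfolding R_def by (rule card_image_le) (use finE in \<open>simp add: Ej_def\<close>)
  define B where "B = q ^ j"
  have Bpos: "B > 0" using q by (simp add: B_def)
  have qB: "q * B \<le> D" using bq[OF j] by (simp add: B_def)
  define T where "T = (D div (q*B) + 1) * B"
  have TD: "T * q \<le> 2 * D"
  proof -
    have "D div (q*B) * (q*B) \<le> D" by (rule div_times_less_eq_dividend)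
    then have "D div (q*B) * B * q + B * q \<le> D + D" using qB by (simp add: algebra_simps)
    then show ?thesis by (simp add: T_def algebra_simps)
  qed
  define P where "P = (\<lambda>v. pot q B (dep v))"
  have gate_facts: "i \<in> S \<and> dep i < dep v \<and> (i \<notin> R \<longrightarrow> P i < P v)"
    if v: "v \<in> S" "cs ! v = CGate g i1 i2" and iv: "i = (if s then i1 else i2)" for v g i1 i2 i s
  proof -
    have ok: "i1 < v" "i2 < v" using wfk[of v] v by (auto simp: node_ok_def S_def)
    have dl: "dep i < dep v" using depth_child[of v cs g i1 i2] ok v iv by (auto simp: S_def dep_def)
    have iS: "i \<in> S" using dl v ok iv by (auto simp: S_def)
    have e: "(v, s) \<in> E" using v by (simp add: E_def isg_def)
    have ch: "child cs (v, s) = i" using v iv by (simp add: child_def)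
    have "P i < P v" if "i \<notin> R"
    proof -
      have "\<not> cls q j (dep i) (dep v)"
        using that e ch by (auto simp: R_def Ej_def image_iff)
      then show ?thesis unfolding P_def using pot_mono[OF Bpos _ dl] q
        by (simp add: cls_def B_def mult.commute)
    qed
    then show ?thesis using iS dl by blast
  qed
  have RS: "R \<subseteq> S"
  proof
    fix c assume "c \<in> R"
    then obtain e where e: "e \<in> E" "c = child cs e" by (auto simp: R_def Ej_def)
    then obtain g i1 i2 where "cs ! fst e = CGate g i1 i2" "fst e \<in> S"
      by (auto simp: E_def isg_def split: node.splits)
    then show "c \<in> S" using gate_facts[of "fst e" g i1 i2 c "snd e"] e by (auto simp: child_def)
  qed
  have outS: "out_node C \<in> S" using wf d by (auto simp: S_def cs_def dep_def wf_circuit_def)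
  have sz: "fsize (phi cs R idx v) < 2 ^ T" if "v \<in> S" for idx v
  proof -
    have "fsize (phi cs R idx v) < 2 ^ (P v + 1)"
    proof (rule phi_size[where S=S, OF _ that])
      fix v g i j assume "v \<in> S" "v < length cs" "cs ! v = CGate g i j" "i < v" "j < v"
      then show "(i \<notin> R \<longrightarrow> i \<in> S \<and> P i < P v) \<and> (j \<notin> R \<longrightarrow> j \<in> S \<and> P j < P v)"
        using gate_facts[of v g i j i True] gate_facts[of v g i j j False] by auto
    qed
    also have "\<dots> \<le> 2 ^ T" using pot_bound[OF Bpos, of "dep v" D q] that
      by (intro power_increasing) (auto simp: P_def T_def S_def)
    finally show ?thesis .
  qed
  have "card R * b \<le> 2 * circuit_size C"
    using le_trans[OF mult_le_mono1[OF cR] cj] sumE by linarith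
  moreover have "\<forall>idx v. v \<in> insert (out_node C) R \<longrightarrow> fsize (phi (nodes C) R idx v) < 2 ^ T"
    using sz RS outS unfolding cs_def by blast
  ultimately show ?thesis using finR TD by blast
qed




lemma logL_bound:
  fixes c2 L :: real and q b :: nat
  assumes c2: "c2 > 0" and L: "L > 0" and q: "q \<ge> 2" and b: "b \<ge> 1"
    and lt: "c2 * L < real q ^ Suc b"
  shows "log 2 L \<le> real b * (2 * log 2 (real q) + \<bar>log 2 c2\<bar> + 1)"
proof -
  have "L < real q ^ Suc b / c2" using lt c2 by (simp add: field_simps)
  then have "log 2 L < log 2 (real q ^ Suc b / c2)" using L by (intro log_less) auto
  also have "\<dots> = real (Suc b) * log 2 (real q) - log 2 c2"
  proof -
    have "log 2 (real q ^ Suc b / c2) = log 2 (real q ^ Suc b) - log 2 c2"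
      using c2 q by (intro log_divide_pos) auto
    moreover have "log 2 (real q ^ Suc b) = real (Suc b) * log 2 (real q)"
      using q by (intro log_nat_power) auto
    ultimately show ?thesis by simp
  qed
  also have "\<dots> \<le> real (Suc b) * log 2 (real q) + \<bar>log 2 c2\<bar>" by simp
  also have "\<dots> \<le> real b * (2 * log 2 (real q) + \<bar>log 2 c2\<bar> + 1)"
  proof -
    have lq: "log 2 (real q) \<ge> 0" using q by simp
    have rb: "1 \<le> real b" using b by simp
    have "log 2 (real q) \<le> real b * log 2 (real q)" using mult_right_mono[OF rb lq] by simp
    then have "real (Suc b) * log 2 (real q) \<le> real b * (2 * log 2 (real q))"
      by (simp add: algebra_simps)
    moreover have "\<bar>log 2 c2\<bar> \<le> real b * (\<bar>log 2 c2\<bar> + 1)"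
      using mult_right_mono[OF rb, of "\<bar>log 2 c2\<bar> + 1"] by simp
    ultimately show ?thesis by (simp add: algebra_simps)
  qed
  finally show ?thesis by simp
qed

lemma powr_eps: "n \<ge> (1::real) \<Longrightarrow> 2 powr (\<epsilon> * log 2 n) = n powr \<epsilon>"
proof -
  assume n: "n \<ge> 1"
  have "(2 powr (log 2 n)) powr \<epsilon> = 2 powr (log 2 n * \<epsilon>)" by (rule powr_powr)
  then show ?thesis using n by (simp add: mult.commute)
qed

theorem theorem4:
  fixes c1 c2 \<epsilon> :: real
  assumes "c1 > 0" and "c2 > 0" and "\<epsilon> > 0"
  shows "\<exists>K::real. \<forall>n::nat. n \<ge> 3 \<longrightarrow>
    (\<forall>C f. wf_circuit n C
        \<and> real (circuit_size C) \<le> c1 * real n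
        \<and> real (circuit_depth C) \<le> c2 * log 2 (real n)
        \<and> (\<forall>x. f x = circuit_eval C x)
      \<longrightarrow> (\<exists>m F. nd_formula n m F \<and> nd_computes F f
            \<and> real m \<le> K * real n / log 2 (log 2 (real n))
            \<and> real (fsize F) \<le> K * real n powr (1 + \<epsilon>)))"
proof -
  note c1 = assms(1) and c2 = assms(2) and ep = assms(3)
  define q :: nat where "q = nat \<lceil>2*c2/\<epsilon>\<rceil> + 2"
  have q2: "q \<ge> 2" by (simp add: q_def)
  have qe: "2 * c2 \<le> real q * \<epsilon>"
  proof -
    have "2*c2/\<epsilon> \<le> real q" unfolding q_def by linarith
    then show ?thesis using ep by (simp add: field_simps)
  qed
  define W where "W = 2 * log 2 (real q) + \<bar>log 2 c2\<bar> + 1"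
  have W0: "W \<ge> 0" using q2 by (simp add: W_def)
  define K where "K = 2*c1*W + 3*(2*c1+1) + 2^q + 2"
  have K1: "2*c1*W \<le> K" and K2: "3*(2*c1+1) \<le> K" and K3: "2^q + 2 \<le> K"
    using c1 W0 by (auto simp: K_def)
  have K0: "K \<ge> 0" using K3 by (smt (verit) zero_le_power zero_le_numeral)
  show ?thesis
  proof (intro exI[of _ K] allI impI, elim conjE)
    fix n :: nat and C and f :: "(nat \<Rightarrow> bool) \<Rightarrow> bool"
    assume n3: "n \<ge> 3" and wf: "wf_circuit n C" and szC: "real (circuit_size C) \<le> c1 * real n"
      and dC: "real (circuit_depth C) \<le> c2 * log 2 (real n)" and fC: "\<forall>x. f x = circuit_eval C x"
    have feq: "f = circuit_eval C" using fC by auto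
    define L where "L = log 2 (real n)"
    have L1: "L > 1" unfolding L_def using n3 by (subst less_log_iff) auto
    have lL: "log 2 L > 0" using L1 by simp
    have npos: "real n \<ge> 1" using n3 by simp
    have npe: "real n powr \<epsilon> \<ge> 1" using npos ep by (intro ge_one_powr_ge_zero) auto
    have np1: "real n powr (1 + \<epsilon>) = real n * real n powr \<epsilon>"
      using npos by (simp add: powr_add)
    have np1ge: "real n powr (1 + \<epsilon>) \<ge> 1" using npos ep by (intro ge_one_powr_ge_zero) auto
    define D where "D = nat \<lfloor>c2 * L\<rfloor>"
    have c2L: "c2 * L \<ge> 0" using c2 L1 by simp
    have DL: "real D \<le> c2 * L" using c2L by (simp add: D_def)
    have DL2: "c2 * L < real D + 1" using c2L by (simp add: D_def)
    have dD: "node_depth (nodes C) (out_node C) \<le> D"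
    proof -
      have "int (circuit_depth C) \<le> \<lfloor>c2 * L\<rfloor>" using dC by (simp add: L_def le_floor_iff)
      then show ?thesis by (simp add: D_def circuit_depth_def)
    qed
    have exb: "\<exists>b. D < q ^ Suc b"
    proof -
      have "D < 2 ^ D" by (rule less_exp)
      also have "\<dots> \<le> q ^ D" using q2 by (intro power_mono) auto
      also have "\<dots> \<le> q ^ Suc D" using q2 by (intro power_increasing) auto
      finally show ?thesis by blast
    qed
    define b where "b = (LEAST b. D < q ^ Suc b)"
    have Db: "D < q ^ Suc b" unfolding b_def using LeastI_ex[OF exb] .
    have bq: "\<And>j. j < b \<Longrightarrow> q ^ Suc j \<le> D"
      unfolding b_def using not_less_Least by (metis not_less)
    show "\<exists>m F. nd_formula n m F \<and> nd_computes F f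
            \<and> real m \<le> K * real n / log 2 (log 2 (real n))
            \<and> real (fsize F) \<le> K * real n powr (1 + \<epsilon>)"
    proof (cases "b = 0")
      case True
      then have Dq: "D < q" using Db by simp
      have "\<exists>F. nd_formula n (card ({}::nat set)) F \<and> nd_computes F (circuit_eval C)
            \<and> fsize F \<le> (card ({}::nat set) + 1) * (2 ^ (D+1) + 2)"
        by (rule construct[OF wf]) (use small_case[OF wf dD] in \<open>auto intro: less_imp_le\<close>)
      then obtain F where F: "nd_formula n 0 F" "nd_computes F f" "fsize F \<le> 2 ^ (D+1) + 2"
        by (auto simp: feq)
      have "(2::nat) ^ (D+1) \<le> 2 ^ q" by (rule power_increasing) (use Dq in auto)
      then have "fsize F \<le> 2 ^ q + 2" using F(3) by linarith
      then have "real (fsize F) \<le> real (2 ^ q + 2)" by (simp only: of_nat_le_iff)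
      then have "real (fsize F) \<le> 2 ^ q + 2" by simp
      also have "\<dots> \<le> K" by (rule K3)
      also have "\<dots> \<le> K * real n powr (1 + \<epsilon>)" using K0 np1ge by (simp add: mult_le_cancel_left1)
      finally have sz: "real (fsize F) \<le> K * real n powr (1 + \<epsilon>)" .
      have "0 \<le> K * real n / log 2 (log 2 (real n))" using K0 lL by (simp add: L_def)
      then show ?thesis using F sz by (intro exI[of _ 0] exI[of _ F]) simp
    next
      case False
      then have b1: "b \<ge> 1" by simp
      obtain R T where fin: "finite R" and cRb: "card R * b \<le> 2 * circuit_size C" and TD: "T * q \<le> 2 * D"
        and sz: "\<And>idx v. v \<in> insert (out_node C) R \<Longrightarrow> fsize (phi (nodes C) R idx v) < 2 ^ T"
        using valiant[OF wf dD q2 b1 bq] by blast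
      obtain F where F: "nd_formula n (card R) F" "nd_computes F f" "fsize F \<le> (card R + 1) * (2 ^ T + 2)"
        using construct[OF wf fin, of "2^T"] sz less_imp_le feq by blast
      have rcb: "real (card R) * real b \<le> 2 * c1 * real n"
      proof -
        have "real (card R * b) \<le> real (2 * circuit_size C)" using cRb by (simp only: of_nat_le_iff)
        then show ?thesis using szC by simp
      qed
      have rb: "real b \<ge> 1" using b1 by simp
      have cR: "real (card R) \<le> 2 * c1 * real n"
        using rcb mult_left_mono[OF rb, of "real (card R)"] by simp
      have TL: "real T \<le> \<epsilon> * L"
      proof -
        have "real (T * q) \<le> real (2 * D)" using TD by (simp only: of_nat_le_iff)
        then have "real T * real q \<le> 2 * real D" by simp
        then have "real T * real q \<le> 2 * c2 * L" using DL by linarith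
        also have "\<dots> \<le> real q * \<epsilon> * L" using qe L1 by (intro mult_right_mono) auto
        finally have "real T * real q \<le> (\<epsilon> * L) * real q" by (simp add: algebra_simps)
        then show ?thesis using q2 by simp
      qed
      have T2: "(2::real) ^ T \<le> real n powr \<epsilon>"
      proof -
        have "(2::real) ^ T = 2 powr real T" by (simp add: powr_realpow)
        also have "\<dots> \<le> 2 powr (\<epsilon> * L)" using TL by simp
        also have "\<dots> = real n powr \<epsilon>" unfolding L_def by (rule powr_eps[OF npos])
        finally show ?thesis .
      qed
      have "real (fsize F) \<le> real ((card R + 1) * (2 ^ T + 2))"
        using F(3) by (simp only: of_nat_le_iff)
      then have "real (fsize F) \<le> (real (card R) + 1) * (2 ^ T + 2)" by (simp add: algebra_simps)
      also have "\<dots> \<le> ((2*c1+1) * real n) * (3 * real n powr \<epsilon>)"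
      proof (rule mult_mono)
        show "real (card R) + 1 \<le> (2*c1+1) * real n" using cR npos by (simp add: algebra_simps)
        show "2 ^ T + 2 \<le> 3 * real n powr \<epsilon>" using T2 npe by simp
      qed (use c1 npos in auto)
      also have "\<dots> = 3*(2*c1+1) * real n powr (1 + \<epsilon>)" by (simp add: np1 algebra_simps)
      also have "\<dots> \<le> K * real n powr (1 + \<epsilon>)" using K2 np1ge by (intro mult_right_mono) auto
      finally have szF: "real (fsize F) \<le> K * real n powr (1 + \<epsilon>)" .
      have "D + 1 \<le> q ^ Suc b" using Db by simp
      then have "real (D + 1) \<le> real (q ^ Suc b)" by (simp only: of_nat_le_iff)
      then have "c2 * L < real q ^ Suc b" using DL2 by simp
      then have lb: "log 2 L \<le> real b * W"
        unfolding W_def using logL_bound[OF c2 _ q2 b1] L1 by simp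
      have "real (card R) * log 2 L \<le> real (card R) * (real b * W)" using lb by (intro mult_left_mono) auto
      also have "\<dots> = (real (card R) * real b) * W" by simp
      also have "\<dots> \<le> (2 * c1 * real n) * W" using rcb W0 by (intro mult_right_mono) auto
      also have "\<dots> = (2 * c1 * W) * real n" by simp
      also have "\<dots> \<le> K * real n" using K1 by (intro mult_right_mono) auto
      finally have "real (card R) * log 2 L \<le> K * real n" .
      then have m: "real (card R) \<le> K * real n / log 2 (log 2 (real n))"
        using lL by (simp add: L_def pos_le_divide_eq)
      show ?thesis using F m szF by blast
    qed
  qed
qed


end
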